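(* Let $F$ be a continuous distribution function with $F(0)=0$ and density $f:[0,\infty)\to[0,\infty)$, such that there are constants $c>0$, $\tau>3$ with $1-F(x)\le cx^{1-\tau}$ for all $x\ge0$. Assume further that there exists $a>0$ such that, as $y\downarrow0$, $$\int_y^1\frac{\bar F^{-1}(u)}{\underline f(\bar F^{-1}(u))}\,du=O(y^{-a}),$$ where $\underline f(x)=\inf_{0\le y\le x}f(y)$. For $u\in(0,1)$ let $u_N=\lceil uN\rceil/N$. Then there exists $\alpha>0$ such that $$\int_0^1\bar F^{-1}(u)\big(\bar F^{-1}(u)-\bar F^{-1}(u_N)\big)\,du=O(N^{-\alpha}),$$ and, for $i=1,2$, $$\int_0^1\big(\bar F^{-1}(u)^i-\bar F^{-1}(u_N)^i\big)\,du=O(N^{-\alpha}).$$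
   Context: $\bar F(x)=1-F(x)$ and, for $u\in(0,1)$, $\bar F^{-1}(u)=\inf\{s:\bar F(s)\le u\}$ (so $\bar F^{-1}$ is non-increasing and $\bar F^{-1}(U)$ has distribution $F$ for $U$ uniform on $(0,1)$). *)

theory Defs
  imports "HOL-Analysis.Analysis" "HOL-Library.Landau_Symbols"
begin

definition surv_inv :: "(real \<Rightarrow> real) \<Rightarrow> real \<Rightarrow> real" where
  "surv_inv F u = Inf {s. 1 - F s \<le> u}"

definition dens_low :: "(real \<Rightarrow> real) \<Rightarrow> real \<Rightarrow> real" where
  "dens_low f x = Inf (f ` {0..x})"

definition grid_round :: "nat \<Rightarrow> real \<Rightarrow> real" where
  "grid_round N u = real_of_int (ceiling (u * real N)) / real N"

end

theory Submission
  imports Defs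
begin

lemma powr_int:
  fixes a c :: real
  assumes a: "-1 < a" and c: "c \<ge> 0"
  shows "set_integrable lborel {0..c} (\<lambda>x. x powr a)"
    "(LINT x:{0..c}|lborel. x powr a) = c powr (a+1)/(a+1)"
proof -
  have hi: "((\<lambda>x. x powr a) has_integral (c powr (a+1) / (a+1))) {0..c}"
    using has_integral_powr_from_0[OF a c] .
  have "(\<lambda>x. x powr a) absolutely_integrable_on {0..c}"
    by (rule nonnegative_absolutely_integrable_1) (use hi in \<open>auto simp: integrable_on_def\<close>)
  then show si: "set_integrable lborel {0..c} (\<lambda>x. x powr a)"
    unfolding set_integrable_def
    by (subst (asm) integrable_completion) auto
  show "(LINT x:{0..c}|lborel. x powr a) = c powr (a+1)/(a+1)"
    using set_borel_integral_eq_integral(2)[OF si] hi by (simp add: integral_unique)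
qed

context
  fixes F :: "real \<Rightarrow> real"
  assumes F_mono: "mono F"
    and F_top: "(F \<longlongrightarrow> 1) at_top"
    and F_cont: "continuous_on UNIV F"
    and F0: "F 0 = 0"
begin

lemma Qset_ne: "0 < u \<Longrightarrow> u < 1 \<Longrightarrow> {s. 1 - F s \<le> u} \<noteq> {}"
proof -
  assume u: "0 < u" "u < 1"
  have "eventually (\<lambda>x. 1 - u < F x) at_top"
    using order_tendstoD(1)[OF F_top] u by simp
  then obtain x where "1 - u < F x" by (auto simp: eventually_at_top_linorder)
  then show ?thesis by (auto intro!: exI[of _ x])
qed

lemma Qset_pos: "u < 1 \<Longrightarrow> s \<in> {s. 1 - F s \<le> u} \<Longrightarrow> 0 < s"
proof (rule ccontr)
  assume "u < 1" "s \<in> {s. 1 - F s \<le> u}" "\<not> 0 < s"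
  then have "F s \<le> F 0" using F_mono by (auto simp: mono_def)
  with \<open>u < 1\<close> \<open>s \<in> _\<close> F0 show False by auto
qed

lemma Qset_bdd: "u < 1 \<Longrightarrow> bdd_below {s. 1 - F s \<le> u}"
  using Qset_pos by (meson bdd_below.I less_imp_le)

lemma Q_nonneg: "0 < u \<Longrightarrow> u < 1 \<Longrightarrow> 0 \<le> surv_inv F u"
  unfolding surv_inv_def
  by (rule cInf_greatest[OF Qset_ne]) (auto dest: Qset_pos)

lemma Q_anti: "0 < u \<Longrightarrow> u \<le> v \<Longrightarrow> v < 1 \<Longrightarrow> surv_inv F v \<le> surv_inv F u"
  unfolding surv_inv_def
  by (rule cInf_superset_mono[OF Qset_ne Qset_bdd]) auto

lemma Q_le_iff: "0 < u \<Longrightarrow> u < 1 \<Longrightarrow> surv_inv F u \<le> t \<longleftrightarrow> 1 - F t \<le> u"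
proof
  assume u: "0 < u" "u < 1"
  have cl: "closed {s. 1 - F s \<le> u}"
    by (intro closed_Collect_le continuous_intros F_cont)
  have "surv_inv F u \<in> {s. 1 - F s \<le> u}" unfolding surv_inv_def
    by (rule closed_contains_Inf[OF Qset_ne[OF u] Qset_bdd[OF u(2)] cl])
  moreover assume "surv_inv F u \<le> t"
  ultimately show "1 - F t \<le> u" using F_mono by (auto simp: mono_def) (smt (verit))
next
  assume u: "0 < u" "u < 1" and "1 - F t \<le> u"
  then show "surv_inv F u \<le> t" unfolding surv_inv_def
    by (intro cInf_lower Qset_bdd) auto
qed

lemma Q_meas: "(\<lambda>u. indicator {0<..<1} u * surv_inv F u) \<in> borel_measurable lborel"
proof -
  have "mono_on {0<..<1::real} (\<lambda>u. - surv_inv F u)"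
    by (auto simp: mono_on_def intro: Q_anti)
  then have "(\<lambda>u. - surv_inv F u) \<in> borel_measurable (restrict_space borel {0<..<1})"
    by (rule borel_measurable_mono_on_fnc)
  then have "(\<lambda>u. indicator {0<..<1::real} u *\<^sub>R (- surv_inv F u)) \<in> borel_measurable borel"
    by (subst (asm) borel_measurable_restrict_space_iff) auto
  then have "(\<lambda>u. - (indicator {0<..<1::real} u *\<^sub>R (- surv_inv F u))) \<in> borel_measurable borel"
    by measurable
  then show ?thesis by simp
qed

lemma Q_bound:
  assumes "c > 0" "\<tau> > 1" and tail: "\<And>x. x > 0 \<Longrightarrow> 1 - F x \<le> c * x powr (1 - \<tau>)"
    and u: "0 < u" "u < 1"
  shows "surv_inv F u \<le> (c / u) powr (1 / (\<tau> - 1))"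
proof -
  define x where "x = (c / u) powr (1 / (\<tau> - 1))"
  have xpos: "x > 0" using assms by (simp add: x_def)
  have "x powr (1 - \<tau>) = (c/u) powr ((1 / (\<tau> - 1)) * (1 - \<tau>))"
    unfolding x_def by (simp add: powr_powr)
  also have "(1 / (\<tau> - 1)) * (1 - \<tau>) = -1" using assms by (simp add: field_simps)
  finally have "x powr (1 - \<tau>) = u / c" using assms by (simp add: powr_minus_divide)
  then have "1 - F x \<le> u" using tail[OF xpos] assms by simp
  then show ?thesis unfolding surv_inv_def x_def[symmetric]
    by (intro cInf_lower) (use Qset_bdd[OF u(2)] in auto)
qed

end

definition cell :: "nat \<Rightarrow> nat \<Rightarrow> real set" where
  "cell N k = {(real k - 1) / real N <.. real k / real N}"

lemma cell_iff:
  assumes N: "N \<ge> 1" and k: "k \<ge> 1"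
  shows "u \<in> cell N k \<longleftrightarrow> k = nat \<lceil>u * real N\<rceil>"
proof -
  have Np: "real N > 0" using N by simp
  have "u \<in> cell N k \<longleftrightarrow> real k - 1 < u * real N \<and> u * real N \<le> real k"
    unfolding cell_def using Np by (auto simp: field_simps)
  also have "\<dots> \<longleftrightarrow> \<lceil>u * real N\<rceil> = int k"
    by (subst ceiling_eq_iff) auto
  also have "\<dots> \<longleftrightarrow> k = nat \<lceil>u * real N\<rceil>" using k by auto
  finally show ?thesis .
qed

lemma grid_K:
  assumes N: "N \<ge> 1" and u: "0 < u" "u < 1"
  shows "1 \<le> nat \<lceil>u * real N\<rceil>" "nat \<lceil>u * real N\<rceil> \<le> N"
    "grid_round N u = real (nat \<lceil>u * real N\<rceil>) / real N"
proof -
  have Np: "real N > 0" using N by simp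
  have "u * real N > 0" using u Np by simp
  then show "1 \<le> nat \<lceil>u * real N\<rceil>" by linarith
  have "u * real N \<le> real N" using u Np by simp
  then have "\<lceil>u * real N\<rceil> \<le> int N" by (simp add: ceiling_le_iff)
  then show "nat \<lceil>u * real N\<rceil> \<le> N" by linarith
  show "grid_round N u = real (nat \<lceil>u * real N\<rceil>) / real N"
    unfolding grid_round_def using \<open>u * real N > 0\<close> by (simp add: of_nat_nat)
qed

lemma step_sum:
  fixes a :: "nat \<Rightarrow> real"
  assumes N: "N \<ge> 1" and u: "0 < u" "u < 1"
  shows "(\<Sum>k\<in>{1..N}. a k * indicator (cell N k) u) = a (nat \<lceil>u * real N\<rceil>)"
proof -
  have "(\<Sum>k\<in>{1..N}. a k * indicator (cell N k) u) =
        (\<Sum>k\<in>{1..N}. if k = nat \<lceil>u * real N\<rceil> then a k else 0)"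
    by (intro sum.cong refl) (auto simp: indicator_def cell_iff[OF N])
  also have "\<dots> = a (nat \<lceil>u * real N\<rceil>)"
    using grid_K[OF N u] by (simp add: sum.delta')
  finally show ?thesis .
qed

lemma step_int:
  fixes a :: "nat \<Rightarrow> real"
  assumes N: "N \<ge> 1"
  shows "integrable lborel (\<lambda>u. \<Sum>k\<in>{1..N}. a k * indicator (cell N k) u)"
    "(\<integral>u. (\<Sum>k\<in>{1..N}. a k * indicator (cell N k) u) \<partial>lborel) = (\<Sum>k\<in>{1..N}. a k) / real N"
proof -
  have m: "measure lborel (cell N k) = 1 / real N" for k
    unfolding cell_def using N by (simp add: field_simps)
  have le: "(real k - 1)/real N \<le> real k / real N" for k
    by (simp add: divide_right_mono)
  have i: "integrable lborel (\<lambda>u. a k * indicator (cell N k) u)" for k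
    unfolding cell_def using le[of k] by (intro integrable_mult_right integrable_real_indicator) auto
  show "integrable lborel (\<lambda>u. \<Sum>k\<in>{1..N}. a k * indicator (cell N k) u)" by (rule Bochner_Integration.integrable_sum, rule i)
  have "(\<integral>u. (\<Sum>k\<in>{1..N}. a k * indicator (cell N k) u) \<partial>lborel) =
        (\<Sum>k\<in>{1..N}. (\<integral>u. a k * indicator (cell N k) u \<partial>lborel))"
    by (rule Bochner_Integration.integral_sum) (rule i)
  also have "\<dots> = (\<Sum>k\<in>{1..N}. a k / real N)"
    using m by simp
  finally show "(\<integral>u. (\<Sum>k\<in>{1..N}. a k * indicator (cell N k) u) \<partial>lborel) = (\<Sum>k\<in>{1..N}. a k) / real N"
    by (simp add: sum_divide_distrib)
qed

lemma telesc: "(\<Sum>k\<in>{2..(m::nat)+1}. (g (k - 1) - g k :: real)) = g 1 - g (m+1)"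
  by (induction m) (auto simp: atLeastAtMostSuc_conv)

lemma generic:
  fixes G :: "real \<Rightarrow> real" and h :: "nat \<Rightarrow> real \<Rightarrow> real" and D M \<gamma> :: real
  assumes Ganti: "\<And>u v. 0 < u \<Longrightarrow> u \<le> v \<Longrightarrow> v < 1 \<Longrightarrow> G v \<le> G u"
    and Gnn: "\<And>u. 0 < u \<Longrightarrow> u < 1 \<Longrightarrow> 0 \<le> G u"
    and Gb: "\<And>u. 0 < u \<Longrightarrow> u < 1 \<Longrightarrow> G u \<le> D * u powr (-\<gamma>)"
    and gam: "0 < \<gamma>" "\<gamma> < 1" and D: "0 \<le> D" and M: "0 \<le> M"
    and hint: "\<And>N. N \<ge> 1 \<Longrightarrow> set_integrable lborel {0<..<1} (h N)"
    and h1: "\<And>N u. N \<ge> 2 \<Longrightarrow> 0 < u \<Longrightarrow> u < 1 \<Longrightarrow> grid_round N u < 1 \<Longrightarrow>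
               0 \<le> h N u \<and> h N u \<le> G u - G (grid_round N u)"
    and h2: "\<And>N u. N \<ge> 2 \<Longrightarrow> 0 < u \<Longrightarrow> u < 1 \<Longrightarrow> grid_round N u = 1 \<Longrightarrow> \<bar>h N u\<bar> \<le> M"
  shows "(\<lambda>N. LINT u:{0<..<1}|lborel. h N u) \<in> O(\<lambda>N. real N powr (-(1-\<gamma>)))"
proof -
  define K where "K = D / (1 - \<gamma>) + D + M"
  have key: "\<bar>LINT u:{0<..<1}|lborel. h N u\<bar> \<le> K * real N powr (-(1-\<gamma>))" if N2: "N \<ge> 2" for N
  proof -
    have N1: "N \<ge> 1" using N2 by simp
    have Np: "real N > 0" using N2 by simp
    define g where "g k = G (real k / real N)" for k :: nat
    define a where "a k = (if 2 \<le> k \<and> k < N then g (k - 1) - g k else if k = N then M else 0)" for k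
    define B where "B u = D * (indicator {0..1/real N} u * u powr (-\<gamma>)) +
                          (\<Sum>k\<in>{1..N}. a k * indicator (cell N k) u)" for u
    have pint: "set_integrable lborel {0..1/real N} (\<lambda>x. x powr (-\<gamma>))"
      "(LINT x:{0..1/real N}|lborel. x powr (-\<gamma>)) = (1/real N) powr (-\<gamma>+1)/(-\<gamma>+1)"
      using powr_int[of "-\<gamma>" "1/real N"] gam by auto
    have Bint: "integrable lborel B"
      unfolding B_def using pint(1) step_int(1)[OF N1, of a]
      by (intro Bochner_Integration.integrable_add integrable_mult_right)
         (auto simp: set_integrable_def)
    have Bval: "integral\<^sup>L lborel B = D * ((1/real N) powr (-\<gamma>+1)/(-\<gamma>+1)) + (\<Sum>k\<in>{1..N}. a k) / real N"
      unfolding B_def using pint step_int[OF N1, of a]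
      by (subst Bochner_Integration.integral_add)
         (auto simp: set_integrable_def set_lebesgue_integral_def)
    have g_nn: "0 \<le> g k" if "1 \<le> k" "k < N" for k
      unfolding g_def using that Np by (intro Gnn) (auto simp: field_simps)
    have a_nn: "0 \<le> a k" for k
    proof -
      have "g k \<le> g (k - 1)" if "2 \<le> k" "k < N"
        unfolding g_def using that Np by (intro Ganti) (auto simp: field_simps of_nat_diff)
      then show ?thesis unfolding a_def using M by auto
    qed
    have B_nn: "0 \<le> B u" for u
      unfolding B_def using D a_nn
      by (intro add_nonneg_nonneg mult_nonneg_nonneg sum_nonneg) (auto simp: indicator_def)
    obtain m where m: "N = m + 2" using N2 by (metis add.commute le_Suc_ex)
    have suma: "(\<Sum>k\<in>{1..N}. a k) \<le> g 1 + M"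
    proof -
      have "(\<Sum>k\<in>{1..N}. a k) = a N + a 1 + (\<Sum>k\<in>{2..m+1}. a k)"
        unfolding m by (simp add: sum.atLeast_Suc_atMost numeral_2_eq_2 atLeastAtMostSuc_conv)
      also have "(\<Sum>k\<in>{2..m+1}. a k) = (\<Sum>k\<in>{2..m+1}. g (k - 1) - g k)"
        by (intro sum.cong refl) (auto simp: a_def m)
      also have "\<dots> = g 1 - g (m + 1)" by (rule telesc)
      finally show ?thesis using g_nn[of "m+1"] by (simp add: a_def m)
    qed
    have pw: "\<bar>indicator {0<..<1} u * h N u\<bar> \<le> B u" for u
    proof (cases "0 < u \<and> u < 1")
      case False then show ?thesis using B_nn[of u] by (auto simp: indicator_def)
    next
      case True
      then have u: "0 < u" "u < 1" by auto
      define k where "k = nat \<lceil>u * real N\<rceil>"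
      have k1: "1 \<le> k" and kN: "k \<le> N" and gr: "grid_round N u = real k / real N"
        using grid_K[OF N1 u] by (auto simp: k_def)
      have ucell: "u \<in> cell N k" using cell_iff[OF N1 k1] by (simp add: k_def)
      then have ul: "(real k - 1) / real N < u" and uh: "u \<le> real k / real N"
        by (auto simp: cell_def)
      have Bu: "B u = D * (indicator {0..1/real N} u * u powr (-\<gamma>)) + a k"
        unfolding B_def using step_sum[OF N1 u, of a] by (simp add: k_def)
      have first_nn: "0 \<le> D * (indicator {0..1/real N} u * u powr (-\<gamma>))"
        using D by (auto simp: indicator_def)
      show ?thesis
      proof (cases "k = N")
        case True
        then have "grid_round N u = 1" using gr Np by simp
        then have "\<bar>h N u\<bar> \<le> M" using h2[OF N2 u] by simp
        then show ?thesis using Bu first_nn u True by (simp add: a_def)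
      next
        case False
        then have kl: "k < N" using kN by simp
        then have "real k / real N < 1" using Np by (simp add: divide_less_eq)
        then have "grid_round N u < 1" using gr by simp
        from h1[OF N2 u this] have hb: "0 \<le> h N u" "h N u \<le> G u - g k"
          by (auto simp: gr g_def)
        show ?thesis
        proof (cases "k = 1")
          case True
          have "u \<le> 1 / real N" using uh True by simp
          then have "D * (indicator {0..1/real N} u * u powr (-\<gamma>)) = D * u powr (-\<gamma>)"
            using u by (simp add: indicator_def)
          moreover have "g k \<ge> 0" using g_nn[OF k1 kl] .
          ultimately have "h N u \<le> D * (indicator {0..1/real N} u * u powr (-\<gamma>))"
            using hb Gb[OF u] by linarith
          then show ?thesis using hb Bu a_nn[of k] u by simp
        next
          case False
          then have k2: "2 \<le> k" using k1 by simp
          have "G u \<le> g (k - 1)" unfolding g_def using k2 ul u Np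
            by (intro Ganti) (auto simp: field_simps of_nat_diff)
          then have "h N u \<le> a k" using hb k2 kl by (simp add: a_def)
          then show ?thesis using hb Bu first_nn u by simp
        qed
      qed
    qed
    have "\<bar>LINT u:{0<..<1}|lborel. h N u\<bar> = \<bar>\<integral>u. indicator {0<..<1} u * h N u \<partial>lborel\<bar>"
      by (simp add: set_lebesgue_integral_def)
    also have "\<dots> \<le> integral\<^sup>L lborel B"
      by (rule integral_abs_bound_integral[OF _ Bint pw])
         (use hint[OF N1] in \<open>simp add: set_integrable_def\<close>)
    also have "\<dots> \<le> K * real N powr (-(1-\<gamma>))"
    proof -
      have e1: "(1/real N) powr (-\<gamma>+1) = real N powr (-(1-\<gamma>))"
        using Np by (simp add: powr_divide powr_minus[of "real N" "1 - \<gamma>", simplified] divide_inverse inverse_powr)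
      have g1: "g 1 \<le> D * real N powr \<gamma>"
        using Gb[of "1/real N"] N2 Np by (simp add: g_def powr_divide powr_minus_divide)
      have e2: "real N powr \<gamma> / real N = real N powr (-(1-\<gamma>))"
        using Np by (simp add: powr_diff powr_minus_divide)
      have e3: "1 / real N \<le> real N powr (-(1-\<gamma>))"
      proof -
        have "real N powr (-1) \<le> real N powr (-(1-\<gamma>))"
          using N1 gam by (intro powr_mono) auto
        then show ?thesis using Np by (simp add: powr_minus_divide)
      qed
      have "(\<Sum>k\<in>{1..N}. a k) / real N \<le> (D * real N powr \<gamma> + M) / real N"
        using suma g1 Np by (simp add: divide_right_mono)
      also have "\<dots> = D * (real N powr \<gamma> / real N) + M * (1 / real N)"
        by (simp add: add_divide_distrib)
      also have "\<dots> \<le> D * real N powr (-(1-\<gamma>)) + M * real N powr (-(1-\<gamma>))"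
        using e2 mult_left_mono[OF e3 M] by simp
      finally have "(\<Sum>k\<in>{1..N}. a k) / real N \<le> (D + M) * real N powr (-(1-\<gamma>))"
        by (simp add: algebra_simps)
      moreover have "D * ((1/real N) powr (-\<gamma>+1)/(-\<gamma>+1)) = D / (1 - \<gamma>) * real N powr (-(1-\<gamma>))"
        using e1 by simp
      moreover have "K * real N powr (-(1-\<gamma>)) = D / (1 - \<gamma>) * real N powr (-(1-\<gamma>)) + (D + M) * real N powr (-(1-\<gamma>))"
        by (simp add: K_def algebra_simps)
      ultimately show ?thesis unfolding Bval by linarith
    qed
    finally show ?thesis .
  qed
  show ?thesis
  proof (rule bigoI[where c = K])
    show "eventually (\<lambda>N. norm (LINT u:{0<..<1}|lborel. h N u) \<le> K * norm (real N powr (-(1-\<gamma>)))) at_top"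
      using key by (auto simp: eventually_at_top_linorder intro!: exI[of _ 2])
  qed
qed

lemma grid_props:
  assumes N: "N \<ge> 1" and u: "0 < u" "u < 1"
  shows "u \<le> grid_round N u" "0 < grid_round N u" "grid_round N u \<le> 1"
proof -
  have Np: "real N > 0" using N by simp
  show "u \<le> grid_round N u" unfolding grid_round_def using Np
    by (simp add: field_simps)
  have k: "1 \<le> nat \<lceil>u * real N\<rceil>" "nat \<lceil>u * real N\<rceil> \<le> N"
    and g: "grid_round N u = real (nat \<lceil>u * real N\<rceil>) / real N" using grid_K[OF N u] by auto
  from k(1) have "0 < real (nat \<lceil>u * real N\<rceil>)" by linarith
  then show "0 < grid_round N u" unfolding g using Np by simp
  from k(2) have "real (nat \<lceil>u * real N\<rceil>) \<le> real N" by simp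
  then show "grid_round N u \<le> 1" unfolding g using Np by simp
qed

lemma grid_one:
  assumes N: "N \<ge> 2" and u: "0 < u" "u < 1" and g: "grid_round N u = 1"
  shows "1/2 \<le> u"
proof -
  have N1: "N \<ge> 1" using N by simp
  have Np: "real N > 0" using N by simp
  define k where "k = nat \<lceil>u * real N\<rceil>"
  have k1: "1 \<le> k" and gr: "grid_round N u = real k / real N"
    using grid_K[OF N1 u] by (auto simp: k_def)
  then have kN: "k = N" using g Np by (simp add: field_simps)
  have "u \<in> cell N k" using cell_iff[OF N1 k1] by (simp add: k_def)
  then have "(real N - 1) / real N < u" by (simp add: cell_def kN)
  moreover have "1/2 \<le> (real N - 1) / real N" using N Np by (simp add: field_simps)
  ultimately show ?thesis by linarith
qed

lemma integ_gen:
  fixes Q :: "real \<Rightarrow> real" and \<phi> :: "real \<Rightarrow> real \<Rightarrow> real"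
  assumes Qm: "(\<lambda>u. indicator {0<..<1} u * Q u) \<in> borel_measurable lborel"
    and Qi: "set_integrable lborel {0<..<1} Q"
    and Q2i: "set_integrable lborel {0<..<1} (\<lambda>u. Q u ^ 2)"
    and Qnn: "\<And>u. 0 < u \<Longrightarrow> u < 1 \<Longrightarrow> 0 \<le> Q u"
    and N: "N \<ge> 1"
    and \<phi>m: "\<And>f g :: real \<Rightarrow> real. f \<in> borel_measurable lborel \<Longrightarrow> g \<in> borel_measurable lborel \<Longrightarrow>
                (\<lambda>u. \<phi> (f u) (g u)) \<in> borel_measurable lborel"
    and \<phi>b: "\<And>x y W. 0 \<le> x \<Longrightarrow> \<bar>y\<bar> \<le> W \<Longrightarrow> \<bar>\<phi> x y\<bar> \<le> x^2 + W*x + x + W + W^2"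
  shows "set_integrable lborel {0<..<1} (\<lambda>u. \<phi> (Q u) (Q (grid_round N u)))"
proof -
  define a where "a k = Q (real k / real N)" for k
  define S where "S u = (\<Sum>k\<in>{1..N}. a k * indicator (cell N k) u)" for u
  define W where "W = (\<Sum>k\<in>{1..N}. \<bar>a k\<bar>)"
  have Sm: "S \<in> borel_measurable lborel"
    unfolding S_def using step_int(1)[OF N, of a] by (rule borel_measurable_integrable)
  have QS: "Q (grid_round N u) = S u" if u: "0 < u" "u < 1" for u
    using step_sum[OF N u, of a] grid_K[OF N u] by (simp add: S_def a_def)
  have Wb: "\<bar>Q (grid_round N u)\<bar> \<le> W" if u: "0 < u" "u < 1" for u
  proof -
    have "\<bar>Q (grid_round N u)\<bar> = \<bar>a (nat \<lceil>u * real N\<rceil>)\<bar>"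
      using grid_K[OF N u] by (simp add: a_def)
    also have "\<dots> \<le> W" unfolding W_def using grid_K[OF N u]
      by (intro member_le_sum) auto
    finally show ?thesis .
  qed
  have W0: "0 \<le> W" unfolding W_def by (intro sum_nonneg) auto
  have eq: "indicator {0<..<1} u *\<^sub>R \<phi> (Q u) (Q (grid_round N u)) =
            indicator {0<..<1} u * \<phi> (indicator {0<..<1} u * Q u) (S u)" for u
    by (cases "0 < u \<and> u < 1") (auto simp: QS)
  have meas: "(\<lambda>u. indicator {0<..<1} u *\<^sub>R \<phi> (Q u) (Q (grid_round N u))) \<in> borel_measurable lborel"
    unfolding eq by (rule borel_measurable_times[OF _ \<phi>m[OF Qm Sm]]) auto
  define P where "P u = indicator {0<..<1} u * Q u ^ 2 + (W + 1) * (indicator {0<..<1} u * Q u)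
                       + (W + W^2) * indicator {0<..<1} u" for u
  have Pi: "integrable lborel P"
    unfolding P_def using Qi Q2i
    by (intro Bochner_Integration.integrable_add integrable_mult_right integrable_real_indicator)
       (auto simp: set_integrable_def)
  show ?thesis unfolding set_integrable_def
  proof (rule Bochner_Integration.integrable_bound[OF Pi meas], rule AE_I2)
    fix u
    show "norm (indicator {0<..<1} u *\<^sub>R \<phi> (Q u) (Q (grid_round N u))) \<le> norm (P u)"
    proof (cases "0 < u \<and> u < 1")
      case True
      then have "\<bar>\<phi> (Q u) (Q (grid_round N u))\<bar> \<le> Q u ^ 2 + W * Q u + Q u + W + W^2"
        using \<phi>b Qnn Wb by auto
      moreover have "P u = Q u ^ 2 + W * Q u + Q u + W + W^2"
        using True by (simp add: P_def algebra_simps)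
      ultimately show ?thesis using True by simp
    qed (simp add: P_def)
  qed
qed

theorem lemmaB1:
  fixes F f :: "real \<Rightarrow> real" and c \<tau> :: real
  assumes F_mono: "mono F"
    and F_bot: "(F \<longlongrightarrow> 0) at_bot"
    and F_top: "(F \<longlongrightarrow> 1) at_top"
    and F_cont: "continuous_on UNIV F"
    and F0: "F 0 = 0"
    and f_nonneg: "\<And>x. x \<ge> 0 \<Longrightarrow> f x \<ge> 0"
    and f_density: "\<And>x. x \<ge> 0 \<Longrightarrow>
        set_integrable lborel {0..x} f \<and> F x = (LINT t:{0..x}|lborel. f t)"
    and c_pos: "c > 0" and tau: "\<tau> > 3"
    and tail: "\<And>x. x > 0 \<Longrightarrow> 1 - F x \<le> c * x powr (1 - \<tau>)"
    and quant: "\<exists>a>0. \<exists>C. \<exists>\<delta>>0. \<forall>y. 0 < y \<and> y < \<delta> \<longrightarrow>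
        (\<integral>\<^sup>+ u. indicator {y..1} u *
            (ennreal (surv_inv F u) / ennreal (dens_low f (surv_inv F u))) \<partial>lborel)
          \<le> ennreal (C * y powr (-a))"
  shows "\<exists>\<alpha>>0.
     (\<forall>N\<ge>1. set_integrable lborel {0<..<1}
          (\<lambda>u. surv_inv F u * (surv_inv F u - surv_inv F (grid_round N u))))
   \<and> (\<lambda>N. LINT u:{0<..<1}|lborel.
          surv_inv F u * (surv_inv F u - surv_inv F (grid_round N u)))
       \<in> O(\<lambda>N. real N powr (-\<alpha>))
   \<and> (\<forall>i\<in>{1::nat,2}.
        (\<forall>N\<ge>1. set_integrable lborel {0<..<1}
          (\<lambda>u. surv_inv F u ^ i - surv_inv F (grid_round N u) ^ i))
      \<and> (\<lambda>N. LINT u:{0<..<1}|lborel.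
            surv_inv F u ^ i - surv_inv F (grid_round N u) ^ i)
         \<in> O(\<lambda>N. real N powr (-\<alpha>)))"
proof -
  define Q where "Q = surv_inv F"
  define \<beta> where "\<beta> = 1 / (\<tau> - 1)"
  define \<gamma> where "\<gamma> = 2 * \<beta>"
  have bpos: "0 < \<beta>" using tau by (simp add: \<beta>_def)
  have gam: "0 < \<gamma>" "\<gamma> < 1" using tau bpos by (auto simp: \<gamma>_def \<beta>_def field_simps)
  note ctx = F_mono F_top F_cont F0
  have Qnn: "\<And>u. 0 < u \<Longrightarrow> u < 1 \<Longrightarrow> 0 \<le> Q u"
    unfolding Q_def by (rule Q_nonneg[OF ctx])
  have Qanti: "\<And>u v. 0 < u \<Longrightarrow> u \<le> v \<Longrightarrow> v < 1 \<Longrightarrow> Q v \<le> Q u"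
    unfolding Q_def by (rule Q_anti[OF ctx])
  have Qm: "(\<lambda>u. indicator {0<..<1} u * Q u) \<in> borel_measurable lborel"
    unfolding Q_def by (rule Q_meas[OF ctx])
  have Qb0: "Q u \<le> c powr \<beta> * u powr (-\<beta>)" if u: "0 < u" "u < 1" for u
  proof -
    have "Q u \<le> (c / u) powr \<beta>"
      unfolding Q_def \<beta>_def using Q_bound[OF ctx c_pos _ tail u] tau by simp
    also have "\<dots> = c powr \<beta> * u powr (-\<beta>)"
      using c_pos u by (simp add: powr_divide powr_minus divide_inverse powr_mult inverse_powr)
    finally show ?thesis .
  qed
  have upow: "u powr (-\<beta>) \<le> u powr (-\<gamma>)" if u: "0 < u" "u < 1" for u
    using u bpos by (intro powr_mono') (auto simp: \<gamma>_def)
  have Qb1: "Q u \<le> c powr \<beta> * u powr (-\<gamma>)" if u: "0 < u" "u < 1" for u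
    using Qb0[OF u] upow[OF u] c_pos by (smt (verit) mult_left_mono powr_ge_zero)
  have Qb2: "Q u ^ 2 \<le> c powr \<gamma> * u powr (-\<gamma>)" if u: "0 < u" "u < 1" for u
  proof -
    have "Q u ^ 2 \<le> (c powr \<beta> * u powr (-\<beta>)) ^ 2"
      using Qb0[OF u] Qnn[OF u] by (intro power_mono) auto
    also have "\<dots> = c powr \<gamma> * u powr (-\<gamma>)"
      by (simp add: power2_eq_square \<gamma>_def algebra_simps powr_add[symmetric])
    finally show ?thesis .
  qed
  have pint: "set_integrable lborel {0..1} (\<lambda>x. x powr (-\<gamma>))"
    using powr_int(1)[of "-\<gamma>" 1] gam by simp
  have Qi: "set_integrable lborel {0<..<1} Q"
    unfolding set_integrable_def
  proof (rule Bochner_Integration.integrable_bound[OF _ _ AE_I2])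
    show "integrable lborel (\<lambda>u. c powr \<beta> * (indicator {0..1} u *\<^sub>R u powr (-\<gamma>)))"
      using pint by (intro integrable_mult_right) (simp add: set_integrable_def)
    show "(\<lambda>u. indicator {0<..<1} u *\<^sub>R Q u) \<in> borel_measurable lborel" using Qm by simp
    fix u show "norm (indicator {0<..<1} u *\<^sub>R Q u) \<le> norm (c powr \<beta> * (indicator {0..1} u *\<^sub>R u powr (-\<gamma>)))"
      using Qb1[of u] Qnn[of u] by (auto simp: indicator_def)
  qed
  have Q2i: "set_integrable lborel {0<..<1} (\<lambda>u. Q u ^ 2)"
    unfolding set_integrable_def
  proof (rule Bochner_Integration.integrable_bound[OF _ _ AE_I2])
    show "integrable lborel (\<lambda>u. c powr \<gamma> * (indicator {0..1} u *\<^sub>R u powr (-\<gamma>)))"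
      using pint by (intro integrable_mult_right) (simp add: set_integrable_def)
    have "(\<lambda>u. (indicator {0<..<1} u * Q u) ^ 2) \<in> borel_measurable lborel" using Qm by measurable
    moreover have "(\<lambda>u. (indicator {0<..<1} u * Q u) ^ 2) = (\<lambda>u. indicator {0<..<1} u *\<^sub>R Q u ^ 2)"
      by (auto simp: indicator_def)
    ultimately show "(\<lambda>u. indicator {0<..<1} u *\<^sub>R Q u ^ 2) \<in> borel_measurable lborel" by simp
    fix u show "norm (indicator {0<..<1} u *\<^sub>R Q u ^ 2) \<le> norm (c powr \<gamma> * (indicator {0..1} u *\<^sub>R u powr (-\<gamma>)))"
      using Qb2[of u] by (auto simp: indicator_def)
  qed
  have int1: "set_integrable lborel {0<..<1} (\<lambda>u. Q u - Q (grid_round N u))" if "N \<ge> 1" for N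
  proof (rule integ_gen[OF Qm Qi Q2i Qnn that, of "\<lambda>x y. x - y"])
    fix x y W :: real assume xy: "0 \<le> x" "\<bar>y\<bar> \<le> W"
    have "0 \<le> W * x" "0 \<le> W" "0 \<le> x^2" "0 \<le> W^2" using xy by auto
    then show "\<bar>x - y\<bar> \<le> x^2 + W*x + x + W + W^2"
      using xy by (smt (verit))
  qed auto
  have int2: "set_integrable lborel {0<..<1} (\<lambda>u. Q u ^ 2 - Q (grid_round N u) ^ 2)" if "N \<ge> 1" for N
  proof (rule integ_gen[OF Qm Qi Q2i Qnn that, of "\<lambda>x y. x^2 - y^2"])
    fix x y W :: real assume xy: "0 \<le> x" "\<bar>y\<bar> \<le> W"
    have "y^2 \<le> W^2" using power_mono[of "\<bar>y\<bar>" W 2] xy by simp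
    moreover have "0 \<le> W * x" "0 \<le> W" "0 \<le> x^2" "0 \<le> y^2" using xy by auto
    ultimately show "\<bar>x^2 - y^2\<bar> \<le> x^2 + W*x + x + W + W^2"
      using xy by (smt (verit))
  qed auto
  have intp: "set_integrable lborel {0<..<1} (\<lambda>u. Q u * (Q u - Q (grid_round N u)))" if "N \<ge> 1" for N
  proof (rule integ_gen[OF Qm Qi Q2i Qnn that, of "\<lambda>x y. x * (x - y)"])
    fix x y W :: real assume xy: "0 \<le> x" "\<bar>y\<bar> \<le> W"
    have "\<bar>x * (x - y)\<bar> = x * \<bar>x - y\<bar>" using xy by (simp add: abs_mult)
    also have "\<dots> \<le> x * (x + W)" using xy by (intro mult_left_mono) auto
    also have "\<dots> = x^2 + W*x" by (simp add: power2_eq_square algebra_simps)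
    finally have "\<bar>x * (x - y)\<bar> \<le> x^2 + W*x" .
    moreover have "0 \<le> W" "0 \<le> W^2" using xy by auto
    ultimately show "\<bar>x * (x - y)\<bar> \<le> x^2 + W*x + x + W + W^2"
      using xy by linarith
  qed auto
  define A where "A = Q (1/2)"
  define M where "M = (A + \<bar>Q 1\<bar>)^2 + (A + \<bar>Q 1\<bar>)"
  have A0: "0 \<le> A" unfolding A_def by (rule Qnn) auto
  have M0: "0 \<le> M" unfolding M_def using A0 by auto
  have late: "0 \<le> Q u \<and> Q u \<le> A \<and> Q (grid_round N u) = Q 1"
    if "N \<ge> 2" "0 < u" "u < 1" "grid_round N u = 1" for N u
    using grid_one[OF that] that Qnn[of u] Qanti[of "1/2" u] by (auto simp: A_def)
  have vprops: "u \<le> grid_round N u \<and> 0 < grid_round N u" if "N \<ge> 2" "0 < u" "u < 1" for N u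
    using grid_props[of N u] that by auto
  have O1: "(\<lambda>N. LINT u:{0<..<1}|lborel. Q u - Q (grid_round N u)) \<in> O(\<lambda>N. real N powr (-(1-\<gamma>)))"
  proof (rule generic[where G = Q and D = "c powr \<beta>" and M = M])
    fix N :: nat and u :: real assume h: "2 \<le> N" "0 < u" "u < 1" "grid_round N u < 1"
    then have "Q (grid_round N u) \<le> Q u" using vprops[of N u] h by (intro Qanti) auto
    then show "0 \<le> Q u - Q (grid_round N u) \<and> Q u - Q (grid_round N u) \<le> Q u - Q (grid_round N u)"
      by simp
  next
    fix N :: nat and u :: real assume h: "2 \<le> N" "0 < u" "u < 1" "grid_round N u = 1"
    have l: "0 \<le> Q u" "Q u \<le> A" "Q (grid_round N u) = Q 1" using late[OF h] by auto
    have "0 \<le> (A + \<bar>Q 1\<bar>)^2" by simp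
    then show "\<bar>Q u - Q (grid_round N u)\<bar> \<le> M"
      using l A0 unfolding M_def by linarith
  qed (use Qanti Qnn Qb1 gam M0 int1 in auto)
  have O2: "(\<lambda>N. LINT u:{0<..<1}|lborel. Q u ^ 2 - Q (grid_round N u) ^ 2) \<in> O(\<lambda>N. real N powr (-(1-\<gamma>)))"
  proof (rule generic[where G = "\<lambda>u. Q u ^ 2" and D = "c powr \<gamma>" and M = M])
    fix N :: nat and u :: real assume h: "2 \<le> N" "0 < u" "u < 1" "grid_round N u < 1"
    then have "Q (grid_round N u) \<le> Q u" using vprops[of N u] h by (intro Qanti) auto
    moreover have "0 \<le> Q (grid_round N u)" using vprops[of N u] h by (intro Qnn) auto
    ultimately have "Q (grid_round N u) ^ 2 \<le> Q u ^ 2" by (intro power_mono) auto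
    then show "0 \<le> Q u ^ 2 - Q (grid_round N u) ^ 2 \<and> Q u ^ 2 - Q (grid_round N u) ^ 2 \<le> Q u ^ 2 - Q (grid_round N u) ^ 2"
      by simp
  next
    fix u v :: real assume "0 < u" "u \<le> v" "v < 1"
    then show "Q v ^ 2 \<le> Q u ^ 2" using Qanti Qnn by (intro power_mono) auto
  next
    fix N :: nat and u :: real assume h: "2 \<le> N" "0 < u" "u < 1" "grid_round N u = 1"
    have l: "0 \<le> Q u" "Q u \<le> A" "Q (grid_round N u) = Q 1" using late[OF h] by auto
    have "Q u ^ 2 \<le> A ^ 2" using l by (intro power_mono) auto
    moreover have "A^2 + \<bar>Q 1\<bar>^2 \<le> (A + \<bar>Q 1\<bar>)^2" using A0 by (simp add: power2_eq_square algebra_simps)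
    moreover have "0 \<le> Q u ^ 2" "0 \<le> Q 1 ^ 2" "\<bar>Q 1\<bar>^2 = Q 1 ^ 2" by auto
    ultimately show "\<bar>Q u ^ 2 - Q (grid_round N u) ^ 2\<bar> \<le> M"
      using l(3) A0 unfolding M_def abs_le_iff by (simp only: l(3)) (intro conjI; linarith)
  qed (use Qnn Qb2 gam M0 int2 in auto)
  have Op: "(\<lambda>N. LINT u:{0<..<1}|lborel. Q u * (Q u - Q (grid_round N u))) \<in> O(\<lambda>N. real N powr (-(1-\<gamma>)))"
  proof (rule generic[where G = "\<lambda>u. Q u ^ 2" and D = "c powr \<gamma>" and M = M])
    fix N :: nat and u :: real assume h: "2 \<le> N" "0 < u" "u < 1" "grid_round N u < 1"
    then have a: "Q (grid_round N u) \<le> Q u" using vprops[of N u] h by (intro Qanti) auto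
    moreover have b: "0 \<le> Q (grid_round N u)" using vprops[of N u] h by (intro Qnn) auto
    have c: "0 \<le> Q u" using h by (intro Qnn) auto
    have "Q (grid_round N u) * Q (grid_round N u) \<le> Q u * Q (grid_round N u)"
      by (rule mult_right_mono[OF a b])
    moreover have "0 \<le> Q u * (Q u - Q (grid_round N u))" using a c by simp
    ultimately show "0 \<le> Q u * (Q u - Q (grid_round N u)) \<and> Q u * (Q u - Q (grid_round N u)) \<le> Q u ^ 2 - Q (grid_round N u) ^ 2"
      by (simp add: power2_eq_square algebra_simps)
  next
    fix u v :: real assume "0 < u" "u \<le> v" "v < 1"
    then show "Q v ^ 2 \<le> Q u ^ 2" using Qanti Qnn by (intro power_mono) auto
  next
    fix N :: nat and u :: real assume h: "2 \<le> N" "0 < u" "u < 1" "grid_round N u = 1"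
    have l: "0 \<le> Q u" "Q u \<le> A" "Q (grid_round N u) = Q 1" using late[OF h] by auto
    have "\<bar>Q u * (Q u - Q 1)\<bar> = Q u * \<bar>Q u - Q 1\<bar>" using l by (simp add: abs_mult)
    also have "\<dots> \<le> A * (A + \<bar>Q 1\<bar>)" using l A0 by (intro mult_mono) auto
    also have "\<dots> \<le> (A + \<bar>Q 1\<bar>)^2" using A0 by (simp add: power2_eq_square algebra_simps)
    finally show "\<bar>Q u * (Q u - Q (grid_round N u))\<bar> \<le> M"
      using l A0 unfolding M_def by auto
  qed (use Qnn Qb2 gam M0 intp in auto)
  show ?thesis
    using gam O1 O2 Op int1 int2 intp unfolding Q_def
    by (intro exI[of _ "1 - \<gamma>"]) auto
qed

end
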